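(* Let $f$ be a biderivation of $\mathcal{SV}(0)$, and let $\phi,\psi:\mathcal{SV}(0)\to\mathcal{SV}(0)$ be linear maps and $\rho_1,\rho_2,\rho_3,\theta_1,\theta_2,\theta_3$ linear complex-valued functions on $\mathcal{SV}(0)$ such that for all $x,y$, $$f(x,y)=\sum_{i=1}^3\rho_i(x)D_i(y)+[\phi(x),y]=\sum_{i=1}^3\theta_i(y)D_i(x)+[x,\psi(y)].$$ Let $\lambda\in\mathbb{C}$ be such that $\phi(L_m)-\lambda L_m\in\mathfrak{M}$ and $\psi(L_m)-\lambda L_m\in\mathfrak{M}$ for all $m\in\mathbb{Z}$ (such $\lambda$ exists). Then for every $n\in\mathbb{Z}$ there are $w_0^{(n)},o_0^{(n)}\in\mathbb{C}$ with $$\phi(M_n)=\lambda M_n+w_0^{(n)}M_0,\qquad \psi(M_n)=\lambda M_n+o_0^{(n)}M_0,$$ and moreover $\rho_i(M_n)=\theta_i(M_n)=0$ for $i=1,2,3$ and all $n\in\mathbb{Z}$.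
   Context: $\mathcal{SV}(0)$ is the complex Lie algebra with basis $\{L_i,Y_i,M_i\mid i\in\mathbb{Z}\}$ and brackets $[L_m,L_n]=(m-n)L_{m+n}$, $[L_m,Y_n]=(\frac12 m-n)Y_{m+n}$, $[L_m,M_n]=-nM_{m+n}$, $[Y_m,Y_n]=(m-n)M_{m+n}$, $[Y_m,M_n]=[M_m,M_n]=0$; $\mathfrak{M}=\bigoplus_{i\in\mathbb{Z}}\mathbb{C}M_i$. A biderivation of a Lie algebra $L$ is a bilinear map $f:L\times L\to L$ with $f([x,y],z)=[x,f(y,z)]+[f(x,z),y]$ and $f(x,[y,z])=[f(x,y),z]+[y,f(x,z)]$ for all $x,y,z\in L$. The linear maps $D_1,D_2,D_3$ are defined by $D_1(L_m)=M_m$, $D_1(Y_m)=D_1(M_m)=0$; $D_2(L_m)=mM_m$, $D_2(Y_m)=D_2(M_m)=0$; $D_3(L_m)=0$, $D_3(Y_m)=Y_m$, $D_3(M_m)=2M_m$. *)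

theory Defs
  imports Complex_Main "HOL-Library.Poly_Mapping"
begin

datatype sv_basis = L int | Y int | M int

type_synonym sv = "sv_basis \<Rightarrow>\<^sub>0 complex"

definition sv_scale :: "complex \<Rightarrow> sv \<Rightarrow> sv" where
  "sv_scale c x = Poly_Mapping.map (\<lambda>v. c * v) x"

definition sv_b :: "sv_basis \<Rightarrow> sv" where
  "sv_b b = Poly_Mapping.single b 1"

definition sv_lin_ext :: "(sv_basis \<Rightarrow> sv) \<Rightarrow> sv \<Rightarrow> sv" where
  "sv_lin_ext g x = (\<Sum>b\<in>Poly_Mapping.keys x. sv_scale (Poly_Mapping.lookup x b) (g b))"

fun sv_br :: "sv_basis \<Rightarrow> sv_basis \<Rightarrow> sv" where
  "sv_br (L m) (L n) = sv_scale (of_int (m - n)) (sv_b (L (m + n)))"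
| "sv_br (L m) (Y n) = sv_scale (of_int m / 2 - of_int n) (sv_b (Y (m + n)))"
| "sv_br (L m) (M n) = sv_scale (- of_int n) (sv_b (M (m + n)))"
| "sv_br (Y m) (L n) = sv_scale (- (of_int n / 2 - of_int m)) (sv_b (Y (m + n)))"
| "sv_br (M m) (L n) = sv_scale (of_int m) (sv_b (M (m + n)))"
| "sv_br (Y m) (Y n) = sv_scale (of_int (m - n)) (sv_b (M (m + n)))"
| "sv_br (Y m) (M n) = 0"
| "sv_br (M m) (Y n) = 0"
| "sv_br (M m) (M n) = 0"

definition sv_bracket :: "sv \<Rightarrow> sv \<Rightarrow> sv" where
  "sv_bracket x y = (\<Sum>a\<in>Poly_Mapping.keys x. \<Sum>b\<in>Poly_Mapping.keys y. sv_scale (Poly_Mapping.lookup x a * Poly_Mapping.lookup y b) (sv_br a b))"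

definition sv_linear :: "(sv \<Rightarrow> sv) \<Rightarrow> bool" where
  "sv_linear g \<longleftrightarrow> (\<forall>x y. g (x + y) = g x + g y) \<and> (\<forall>c x. g (sv_scale c x) = sv_scale c (g x))"

definition sv_functional :: "(sv \<Rightarrow> complex) \<Rightarrow> bool" where
  "sv_functional g \<longleftrightarrow> (\<forall>x y. g (x + y) = g x + g y) \<and> (\<forall>c x. g (sv_scale c x) = c * g x)"

definition sv_bilinear :: "(sv \<Rightarrow> sv \<Rightarrow> sv) \<Rightarrow> bool" where
  "sv_bilinear f \<longleftrightarrow> (\<forall>x. sv_linear (f x)) \<and> (\<forall>y. sv_linear (\<lambda>x. f x y))"

definition sv_biderivation :: "(sv \<Rightarrow> sv \<Rightarrow> sv) \<Rightarrow> bool" where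
  "sv_biderivation f \<longleftrightarrow> sv_bilinear f \<and>
     (\<forall>x y z. f (sv_bracket x y) z = sv_bracket x (f y z) + sv_bracket (f x z) y) \<and>
     (\<forall>x y z. f x (sv_bracket y z) = sv_bracket (f x y) z + sv_bracket y (f x z))"

fun sv_D_basis :: "nat \<Rightarrow> sv_basis \<Rightarrow> sv" where
  "sv_D_basis i (L m) = (if i = 1 then sv_b (M m) else if i = 2 then sv_scale (of_int m) (sv_b (M m)) else 0)"
| "sv_D_basis i (Y m) = (if i = 3 then sv_b (Y m) else 0)"
| "sv_D_basis i (M m) = (if i = 3 then sv_scale 2 (sv_b (M m)) else 0)"

definition sv_D :: "nat \<Rightarrow> sv \<Rightarrow> sv" where
  "sv_D i = sv_lin_ext (sv_D_basis i)"

definition sv_in_M :: "sv \<Rightarrow> bool" where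
  "sv_in_M x \<longleftrightarrow> (\<forall>b\<in>Poly_Mapping.keys x. \<exists>n. b = M n)"

end

theory Submission
  imports Defs
begin

lemma lk_scale[simp]: "Poly_Mapping.lookup (sv_scale c x) b = c * Poly_Mapping.lookup x b"
  by (simp add: sv_scale_def map.rep_eq when_def)

lemma lk_b[simp]: "Poly_Mapping.lookup (sv_b a) b = (if a = b then 1 else 0)"
  by (simp add: sv_b_def lookup_single when_def)

lemma keys_b[simp]: "Poly_Mapping.keys (sv_b a) = {a}"
  by (simp add: sv_b_def)

lemma sum_keys_single:
  fixes x :: sv and g :: "sv_basis \<Rightarrow> complex"
  assumes "\<And>a. a \<noteq> z \<Longrightarrow> g a = 0"
  shows "(\<Sum>a\<in>Poly_Mapping.keys x. Poly_Mapping.lookup x a * g a) = Poly_Mapping.lookup x z * g z"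
proof (cases "z \<in> Poly_Mapping.keys x")
  case True
  have "(\<Sum>a\<in>Poly_Mapping.keys x - {z}. Poly_Mapping.lookup x a * g a) = 0"
    by (intro sum.neutral ballI) (simp add: assms)
  then show ?thesis by (subst sum.remove[OF finite_keys True]) simp
next
  case False
  then have "Poly_Mapping.lookup x z = 0" by (simp add: in_keys_iff)
  moreover have "(\<Sum>a\<in>Poly_Mapping.keys x. Poly_Mapping.lookup x a * g a) = 0"
    using False assms by (intro sum.neutral ballI) (metis mult_zero_right)
  ultimately show ?thesis by simp
qed

lemma lk_brR: "Poly_Mapping.lookup (sv_bracket x (sv_b b)) c = (\<Sum>a\<in>Poly_Mapping.keys x. Poly_Mapping.lookup x a * Poly_Mapping.lookup (sv_br a b) c)"
  by (simp add: sv_bracket_def lookup_sum)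

lemma lk_brL: "Poly_Mapping.lookup (sv_bracket (sv_b a) y) c = (\<Sum>b\<in>Poly_Mapping.keys y. Poly_Mapping.lookup y b * Poly_Mapping.lookup (sv_br a b) c)"
  by (simp add: sv_bracket_def lookup_sum)

lemma brR_LL: "Poly_Mapping.lookup (sv_bracket x (sv_b (L m))) (L k) = Poly_Mapping.lookup x (L (k-m)) * of_int (k - 2*m)"
  unfolding lk_brR apply (subst sum_keys_single[where z="L (k-m)"])
  subgoal for a by (cases a) auto
  by (simp add: algebra_simps)

lemma brR_LY: "Poly_Mapping.lookup (sv_bracket x (sv_b (L m))) (Y k) = Poly_Mapping.lookup x (Y (k-m)) * (- (of_int m / 2 - of_int (k-m)))"
  apply (subst lk_brR, subst sum_keys_single[where z="Y (k-m)"])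
  subgoal for a by (cases a) auto
  by (simp add: algebra_simps)

lemma brR_LM: "Poly_Mapping.lookup (sv_bracket x (sv_b (L m))) (M k) = Poly_Mapping.lookup x (M (k-m)) * of_int (k-m)"
  apply (subst lk_brR, subst sum_keys_single[where z="M (k-m)"])
  subgoal for a by (cases a) auto
  by (simp add: algebra_simps)

lemma brR_MM: "Poly_Mapping.lookup (sv_bracket x (sv_b (M n))) (M k) = Poly_Mapping.lookup x (L (k-n)) * (- of_int n)"
  apply (subst lk_brR, subst sum_keys_single[where z="L (k-n)"])
  subgoal for a by (cases a) auto
  by (simp add: algebra_simps)

lemma brR_ML: "Poly_Mapping.lookup (sv_bracket x (sv_b (M n))) (L k) = 0"
  unfolding lk_brR apply (intro sum.neutral ballI)
  subgoal for a by (cases a) auto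
  done

lemma brR_MY: "Poly_Mapping.lookup (sv_bracket x (sv_b (M n))) (Y k) = 0"
  unfolding lk_brR apply (intro sum.neutral ballI)
  subgoal for a by (cases a) auto
  done

lemma brL_ML: "Poly_Mapping.lookup (sv_bracket (sv_b (M n)) y) (L k) = 0"
  unfolding lk_brL apply (intro sum.neutral ballI)
  subgoal for a by (cases a) auto
  done

lemma brL_MY: "Poly_Mapping.lookup (sv_bracket (sv_b (M n)) y) (Y k) = 0"
  unfolding lk_brL apply (intro sum.neutral ballI)
  subgoal for a by (cases a) auto
  done

lemma brL_MM: "Poly_Mapping.lookup (sv_bracket (sv_b (M n)) y) (M k) = Poly_Mapping.lookup y (L (k-n)) * of_int n"
  apply (subst lk_brL, subst sum_keys_single[where z="L (k-n)"])
  subgoal for a by (cases a) auto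
  by (simp add: algebra_simps)

lemma brL_LL: "Poly_Mapping.lookup (sv_bracket (sv_b (L m)) y) (L k) = Poly_Mapping.lookup y (L (k-m)) * of_int (m - (k-m))"
  apply (subst lk_brL, subst sum_keys_single[where z="L (k-m)"])
  subgoal for a by (cases a) auto
  by (simp add: algebra_simps)

lemma brL_LY: "Poly_Mapping.lookup (sv_bracket (sv_b (L m)) y) (Y k) = Poly_Mapping.lookup y (Y (k-m)) * (of_int m / 2 - of_int (k-m))"
  apply (subst lk_brL, subst sum_keys_single[where z="Y (k-m)"])
  subgoal for a by (cases a) auto
  by (simp add: algebra_simps)

lemma brL_LM: "Poly_Mapping.lookup (sv_bracket (sv_b (L m)) y) (M k) = Poly_Mapping.lookup y (M (k-m)) * (- of_int (k-m))"
  apply (subst lk_brL, subst sum_keys_single[where z="M (k-m)"])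
  subgoal for a by (cases a) auto
  by (simp add: algebra_simps)

lemma D_b[simp]: "sv_D i (sv_b b) = sv_D_basis i b"
  by (auto simp: sv_D_def sv_lin_ext_def sv_scale_def intro!: poly_mapping_eqI simp: map.rep_eq when_def)

lemma sum123: "(\<Sum>i\<in>{1..3::nat}. F i) = F 1 + F 2 + F (3::nat)"
  by (simp add: numeral_3_eq_3 numeral_2_eq_2 atLeastAtMostSuc_conv add.commute add.left_commute)

lemma two_eq:
  fixes a b c :: complex
  assumes "a + c * b = 0" "a + (c + 1) * b = 0"
  shows "a = 0 \<and> b = 0"
proof -
  have "b = 0" using assms by (simp add: algebra_simps) (metis add_left_cancel add.assoc add_0_right)
  then show ?thesis using assms by simp
qed

theorem lemma3p4:
  fixes f :: "sv \<Rightarrow> sv \<Rightarrow> sv" and \<phi> \<psi> :: "sv \<Rightarrow> sv"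
    and \<rho> \<theta> :: "nat \<Rightarrow> sv \<Rightarrow> complex" and lam :: complex
  assumes "sv_biderivation f"
    and "sv_linear \<phi>" and "sv_linear \<psi>"
    and "\<And>i. i \<in> {1..3} \<Longrightarrow> sv_functional (\<rho> i)"
    and "\<And>i. i \<in> {1..3} \<Longrightarrow> sv_functional (\<theta> i)"
    and "\<And>x y. f x y = (\<Sum>i\<in>{1..3}. sv_scale (\<rho> i x) (sv_D i y)) + sv_bracket (\<phi> x) y"
    and "\<And>x y. f x y = (\<Sum>i\<in>{1..3}. sv_scale (\<theta> i y) (sv_D i x)) + sv_bracket x (\<psi> y)"
    and "\<And>m. sv_in_M (\<phi> (sv_b (L m)) - sv_scale lam (sv_b (L m)))"
    and "\<And>m. sv_in_M (\<psi> (sv_b (L m)) - sv_scale lam (sv_b (L m)))"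
  shows "(\<forall>n. \<exists>w o'. \<phi> (sv_b (M n)) = sv_scale lam (sv_b (M n)) + sv_scale w (sv_b (M 0))
                 \<and> \<psi> (sv_b (M n)) = sv_scale lam (sv_b (M n)) + sv_scale o' (sv_b (M 0)))
       \<and> (\<forall>i\<in>{1..3}. \<forall>n. \<rho> i (sv_b (M n)) = 0 \<and> \<theta> i (sv_b (M n)) = 0)"
proof -
  let ?LK = "Poly_Mapping.lookup"
  note H = assms
  have E: "\<rho> 1 x * ?LK (sv_D 1 y) c + \<rho> 2 x * ?LK (sv_D 2 y) c + \<rho> 3 x * ?LK (sv_D 3 y) c
        + ?LK (sv_bracket (\<phi> x) y) c
      = \<theta> 1 y * ?LK (sv_D 1 x) c + \<theta> 2 y * ?LK (sv_D 2 x) c + \<theta> 3 y * ?LK (sv_D 3 x) c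
        + ?LK (sv_bracket x (\<psi> y)) c" for x y c
  proof -
    have "?LK (f x y) c = ?LK (f x y) c" by simp
    then show ?thesis
      by (subst (asm) H(6), subst (asm) H(7)) (simp only: sum123 lookup_add lk_scale)
  qed
  have phiL: "?LK (\<phi> (sv_b (L m))) (L j) = (if j = m then lam else 0)"
     "?LK (\<phi> (sv_b (L m))) (Y j) = 0" for m j
  proof -
    have "L j \<notin> Poly_Mapping.keys (\<phi> (sv_b (L m)) - sv_scale lam (sv_b (L m)))"
         "Y j \<notin> Poly_Mapping.keys (\<phi> (sv_b (L m)) - sv_scale lam (sv_b (L m)))"
      using H(8)[of m] unfolding sv_in_M_def by auto
    then show "?LK (\<phi> (sv_b (L m))) (L j) = (if j = m then lam else 0)"
     "?LK (\<phi> (sv_b (L m))) (Y j) = 0"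
      by (auto simp: in_keys_iff lookup_minus)
  qed
  have psiL: "?LK (\<psi> (sv_b (L m))) (L j) = (if j = m then lam else 0)"
     "?LK (\<psi> (sv_b (L m))) (Y j) = 0" for m j
  proof -
    have "L j \<notin> Poly_Mapping.keys (\<psi> (sv_b (L m)) - sv_scale lam (sv_b (L m)))"
         "Y j \<notin> Poly_Mapping.keys (\<psi> (sv_b (L m)) - sv_scale lam (sv_b (L m)))"
      using H(9)[of m] unfolding sv_in_M_def by auto
    then show "?LK (\<psi> (sv_b (L m))) (L j) = (if j = m then lam else 0)"
     "?LK (\<psi> (sv_b (L m))) (Y j) = 0"
      by (auto simp: in_keys_iff lookup_minus)
  qed
  note brs = brR_LL brR_LY brR_LM brR_MM brR_ML brR_MY brL_ML brL_MY brL_MM brL_LL brL_LY brL_LM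
  have PL: "?LK (\<phi> (sv_b (M n))) (L j) = 0" for n j
    using E[of "sv_b (M n)" "sv_b (L (j-1))" "L (2*j-1)"] by (simp add: brs)
  have PY: "?LK (\<phi> (sv_b (M n))) (Y j) = 0" for n j
    using E[of "sv_b (M n)" "sv_b (L (2*j-2))" "Y (3*j-2)"] by (simp add: brs)
  have PM: "?LK (\<phi> (sv_b (M n))) (M j) = (if j = n then lam else 0)" if "j \<noteq> 0" for n j
  proof -
    have "?LK (\<phi> (sv_b (M n))) (M j) * of_int j = (if j = n then lam * of_int n else 0)"
      using E[of "sv_b (M n)" "sv_b (L (n-j+1))" "M (n+1)"] that by (simp add: brs psiL)
    then show ?thesis using that by (auto split: if_splits)
  qed
  have rho12: "\<rho> 1 (sv_b (M n)) + of_int m * \<rho> 2 (sv_b (M n)) = 0" if "m \<noteq> n" for n m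
    using E[of "sv_b (M n)" "sv_b (L m)" "M m"] that by (simp add: brs psiL algebra_simps)
  have QL: "?LK (\<psi> (sv_b (M n))) (L j) = 0" for n j
    using E[of "sv_b (L (j+1))" "sv_b (M n)" "L (2*j+1)"] by (simp add: brs)
  have QY: "?LK (\<psi> (sv_b (M n))) (Y j) = 0" for n j
    using E[of "sv_b (L (2*j+2))" "sv_b (M n)" "Y (3*j+2)"] by (simp add: brs)
  have QM: "?LK (\<psi> (sv_b (M n))) (M j) = (if j = n then lam else 0)" if "j \<noteq> 0" for n j
  proof -
    have "?LK (\<psi> (sv_b (M n))) (M j) * of_int j = (if j = n then lam * of_int n else 0)"
      using E[of "sv_b (L (n-j+1))" "sv_b (M n)" "M (n+1)"] that
      by (cases "j = n") (auto simp: brs phiL)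
    then show ?thesis using that by (auto split: if_splits)
  qed
  have th12: "\<theta> 1 (sv_b (M n)) + of_int m * \<theta> 2 (sv_b (M n)) = 0" if "m \<noteq> n" for n m
    using E[of "sv_b (L m)" "sv_b (M n)" "M m"] that by (cases "n = 0") (simp_all add: brs phiL algebra_simps)
  have r3: "\<rho> 3 (sv_b (M n)) = 0" for n
    using E[of "sv_b (M n)" "sv_b (M (n+1))" "M (n+1)"] by (simp add: brs PL QL)
  have t3: "\<theta> 3 (sv_b (M k)) = 0" for k
    using E[of "sv_b (M (k+1))" "sv_b (M k)" "M (k+1)"] by (simp add: brs PL QL)
  have r12: "\<rho> 1 (sv_b (M n)) = 0 \<and> \<rho> 2 (sv_b (M n)) = 0" for n
    proof -
    have a: "\<rho> 1 (sv_b (M n)) + of_int (n+1) * \<rho> 2 (sv_b (M n)) = 0" using rho12[of "n+1" n] by simp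
    have b: "\<rho> 1 (sv_b (M n)) + (of_int (n+1) + 1) * \<rho> 2 (sv_b (M n)) = 0"
      using rho12[of "n+2" n] by (simp add: algebra_simps)
    show ?thesis using two_eq[OF a b] .
  qed
  have t12: "\<theta> 1 (sv_b (M n)) = 0 \<and> \<theta> 2 (sv_b (M n)) = 0" for n
    proof -
    have a: "\<theta> 1 (sv_b (M n)) + of_int (n+1) * \<theta> 2 (sv_b (M n)) = 0" using th12[of "n+1" n] by simp
    have b: "\<theta> 1 (sv_b (M n)) + (of_int (n+1) + 1) * \<theta> 2 (sv_b (M n)) = 0"
      using th12[of "n+2" n] by (simp add: algebra_simps)
    show ?thesis using two_eq[OF a b] .
  qed
  show ?thesis
  proof (rule conjI; intro allI ballI)
    fix n
    let ?w = "?LK (\<phi> (sv_b (M n))) (M 0) - (if n = 0 then lam else 0)"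
    let ?o = "?LK (\<psi> (sv_b (M n))) (M 0) - (if n = 0 then lam else 0)"
    have "\<phi> (sv_b (M n)) = sv_scale lam (sv_b (M n)) + sv_scale ?w (sv_b (M 0))"
      by (rule poly_mapping_eqI, case_tac k) (auto simp: lookup_add PL PY PM)
    moreover have "\<psi> (sv_b (M n)) = sv_scale lam (sv_b (M n)) + sv_scale ?o (sv_b (M 0))"
      by (rule poly_mapping_eqI, case_tac k) (auto simp: lookup_add QL QY QM)
    ultimately show "\<exists>w o'. \<phi> (sv_b (M n)) = sv_scale lam (sv_b (M n)) + sv_scale w (sv_b (M 0))
                 \<and> \<psi> (sv_b (M n)) = sv_scale lam (sv_b (M n)) + sv_scale o' (sv_b (M 0))" by blast
  next
    fix i :: nat and n assume "i \<in> {1..3}"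
    then have "i = 1 \<or> i = 2 \<or> i = 3" by auto
    then show "\<rho> i (sv_b (M n)) = 0 \<and> \<theta> i (sv_b (M n)) = 0"
      using r12 t12 r3 t3 by auto
  qed
qed

end
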